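(* Let $k^2$ be a constant and consider the system $$u_t+(u^2)_x=\sigma_x,\qquad \sigma_t+u\sigma_x=k^2u_x.$$ For any integer $p$ there is a solution of this system up to $e^{-p}$ in the sense of $\mathbf{R}\langle\varepsilon\rangle$-distributions of the form $$u(t,x,\varepsilon)=u_0+\Delta u\,U\!\left(\frac{x-vt}{\varepsilon}\right),\qquad \sigma(t,x,\varepsilon)=\sigma_0+\Delta\sigma\,\Sigma\!\left(\frac{x-vt}{\varepsilon}\right),$$ where $u_0,\Delta u,\sigma_0,\Delta\sigma,v$ are real, $\Delta u\ne0$, $\Delta\sigma\neq0$, $U(x)=\int_{-\infty}^x\widetilde U(y)\,dy$, $\Sigma(x)=\int_{-\infty}^x\widetilde\Sigma(y)\,dy$ with $\widetilde U,\widetilde\Sigma\in\mathcal{S}(\mathbf{R})$ and $\int\widetilde U=\int\widetilde\Sigma=1$; that is, for every $t\in[0,T]$ and every $\psi\in\mathcal{S}(\mathbf{R})$, $$\int_{-\infty}^{+\infty}\{u_t+2uu_x-\sigma_x\}\psi(x)\,dx=\sum_{k=p}^{\infty}\xi_k\varepsilon^k,\qquad \int_{-\infty}^{+\infty}\{\sigma_t+u\sigma_x-k^2u_x\}\psi(x)\,dx=\sum_{k=p}^{\infty}\eta_k\varepsilon^k$$ in $\mathbf{R}\langle\varepsilon\rangle$. Moreover, $$v=2u_0+\Delta u-\frac{\Delta\sigma}{\Delta u},\qquad (\Delta\sigma)^2-\left(u_0+\tfrac12\Delta u\right)\Delta u\,\Delta\sigma-k^2(\Delta u)^2=0.$$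
   Context: $\mathbf{R}\langle\varepsilon\rangle$ is the field of formal Laurent series $\sum_{n\ge 0}\xi_{n+k}\varepsilon^{n+k}$ ($k\in\mathbf{Z}$, $\xi_i\in\mathbf{R}$) with the non-Archimedean norm $|x|_\nu=e^{-\nu(x)}$, where $\nu(x)$ is the lowest exponent with nonzero coefficient. Integrals depending on $\varepsilon\in(0,1]$ are regarded as elements of $\mathbf{R}\langle\varepsilon\rangle$ via their expansions in powers of $\varepsilon$; "up to $e^{-p}$" means these elements only contain powers $\varepsilon^k$ with $k\ge p$. $T>0$ is a fixed time horizon and $\mathcal{S}(\mathbf{R})$ is the Schwartz space. Here $u$ is the velocity of a medium (of density 1) and $\sigma$ the stress. *)

theory Defs
  imports "HOL-Analysis.Analysis" "HOL-Library.Landau_Symbols"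
begin

definition schwartz :: "(real \<Rightarrow> real) \<Rightarrow> bool" where
  "schwartz f \<longleftrightarrow>
     (\<forall>n x. ((deriv ^^ n) f) differentiable (at x)) \<and>
     (\<forall>m n. \<exists>C. \<forall>x. \<bar>x\<bar> ^ m * \<bar>(deriv ^^ n) f x\<bar> \<le> C)"

text \<open>F (a function of eps in (0,1]) equals the element sum over k >= p of xi_k eps^k
of the Laurent series field, in the sense of its asymptotic expansion in powers
of eps as eps tends to 0+.\<close>
definition expands_as :: "(real \<Rightarrow> real) \<Rightarrow> int \<Rightarrow> (int \<Rightarrow> real) \<Rightarrow> bool" where
  "expands_as F p \<xi> \<longleftrightarrow>
     (\<forall>n::nat. (\<lambda>\<epsilon>. F \<epsilon> - (\<Sum>k\<in>{p..<p + int n}. \<xi> k * \<epsilon> powi k))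
                 \<in> O[at_right 0](\<lambda>\<epsilon>. \<epsilon> powi (p + int n)))"

text \<open>F vanishes up to e^{-p} in R<eps>: its expansion only contains powers eps^k, k >= p.\<close>
definition zero_up_to :: "int \<Rightarrow> (real \<Rightarrow> real) \<Rightarrow> bool" where
  "zero_up_to p F \<longleftrightarrow> (\<exists>\<xi>. expands_as F p \<xi>)"

definition primitive :: "(real \<Rightarrow> real) \<Rightarrow> real \<Rightarrow> real" where
  "primitive F x = (LBINT y:{..x}. F y)"

definition wave :: "real \<Rightarrow> real \<Rightarrow> real \<Rightarrow> (real \<Rightarrow> real) \<Rightarrow> real \<Rightarrow> real \<Rightarrow> real \<Rightarrow> real" where
  "wave c d v F t x \<epsilon> = c + d * primitive F ((x - v * t) / \<epsilon>)"

end

theory Submission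
  imports Defs "HOL-Computational_Algebra.Polynomial" "HOL-Computational_Algebra.Fundamental_Theorem_Algebra"
begin

definition S :: "real \<Rightarrow> real" where "S x = 1 - (tanh x)^2"

lemma cosh_real_ne0: "cosh (x::real) \<noteq> 0"
  using cosh_real_pos[of x] by simp

lemma S_cosh: "S x = 1 / (cosh x)^2"
proof -
  have c: "cosh x \<noteq> 0" by (rule cosh_real_ne0)
  have e: "(cosh x)^2 - (sinh x)^2 = 1" by (simp add: cosh_square_eq)
  have "S x = ((cosh x)^2 - (sinh x)^2) / (cosh x)^2" using c unfolding S_def tanh_def
    by (simp add: field_simps power2_eq_square)
  then show ?thesis using e by simp
qed

lemma S_pos: "S x > 0" by (simp add: S_cosh cosh_real_ne0)

lemma deriv_tanh_real: "(tanh has_real_derivative S x) (at (x::real))"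
proof -
  show ?thesis
    using has_field_derivative_tanh[OF cosh_real_ne0 DERIV_ident, of x] by (simp add: S_def)
qed

lemma deriv_S: "(S has_real_derivative (- 2 * tanh x * S x)) (at x)"
proof -
  have "((\<lambda>x. (tanh x)^2) has_real_derivative (of_nat 2 * (S x * tanh x ^ (2 - Suc 0)))) (at x)"
    by (rule DERIV_power[OF deriv_tanh_real])
  then have "((\<lambda>x. 1 - (tanh x)^2) has_real_derivative (0 - of_nat 2 * (S x * tanh x ^ (2 - Suc 0)))) (at x)"
    by (intro DERIV_diff) auto
  then have "((\<lambda>x. 1 - (tanh x)^2) has_real_derivative (- (2 * tanh x * S x))) (at x)"
    by (simp add: mult_ac)
  then show ?thesis unfolding S_def[abs_def] by simp
qed

lemma pow_le_exp: "0 \<le> y \<Longrightarrow> y ^ k / fact k \<le> exp (y::real)"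
proof -
  assume y: "0 \<le> y"
  have "(\<lambda>n. y^n /\<^sub>R fact n) sums exp y" by (rule exp_converges)
  then have s: "summable (\<lambda>n. y^n / fact n)" and e: "exp y = (\<Sum>n. y^n / fact n)"
    by (auto simp: sums_iff divide_inverse_commute)
  have "(\<Sum>n\<in>{k}. y^n / fact n) \<le> (\<Sum>n. y^n / fact n)"
    by (rule sum_le_suminf[OF s]) (use y in auto)
  then show ?thesis using e by simp
qed

lemma pow_le_cosh: "\<bar>x\<bar> ^ k \<le> 2 * fact k * cosh (x::real)"
proof -
  have "\<bar>x\<bar> ^ k / fact k \<le> exp \<bar>x\<bar>" by (rule pow_le_exp) simp
  moreover have "exp \<bar>x\<bar> \<le> 2 * cosh x"
    by (cases "x \<ge> 0") (auto simp: cosh_def)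
  ultimately have "\<bar>x\<bar> ^ k / fact k \<le> 2 * cosh x" by simp
  then show ?thesis by (simp add: field_simps)
qed

definition W :: "real \<Rightarrow> real" where "W x = S (x/2)"

lemma W_pos: "W x > 0" by (simp add: W_def S_pos)

lemma S_le_W: "\<bar>x\<bar> ^ k * S x \<le> 2 * fact k * W x"
proof -
  define c where "c = (cosh (x/2))^2"
  have c1: "c \<ge> 1" unfolding c_def
    by (metis abs_ge_self abs_power2 cosh_real_ge_1 dual_order.trans one_le_power)
  have cx: "cosh x = 2 * c - 1" unfolding c_def
    using cosh_double[of "x/2"] cosh_square_eq[of "x/2"] by (simp add: power2_eq_square)
  have "cosh x \<ge> c" using cx c1 by simp
  have cp: "cosh x > 0" by (simp add: cosh_real_pos)
  have "\<bar>x\<bar> ^ k * S x = \<bar>x\<bar> ^ k / (cosh x)^2" by (simp add: S_cosh)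
  also have "\<dots> \<le> 2 * fact k * cosh x / (cosh x)^2"
    by (rule divide_right_mono[OF pow_le_cosh]) simp
  also have "\<dots> = 2 * fact k / cosh x" using cp by (simp add: power2_eq_square)
  also have "\<dots> \<le> 2 * fact k / c"
    using \<open>cosh x \<ge> c\<close> c1 by (intro divide_left_mono) auto
  also have "\<dots> = 2 * fact k * W x" by (simp add: W_def S_cosh c_def)
  finally show ?thesis .
qed

lemma poly_bound: "\<bar>t::real\<bar> \<le> 1 \<Longrightarrow> \<bar>poly q t\<bar> \<le> (\<Sum>i\<le>degree q. \<bar>coeff q i\<bar>)"
proof -
  assume t: "\<bar>t\<bar> \<le> 1"
  have "\<bar>poly q t\<bar> \<le> (\<Sum>i\<le>degree q. \<bar>coeff q i * t ^ i\<bar>)"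
    unfolding poly_altdef by (rule sum_abs)
  also have "\<dots> \<le> (\<Sum>i\<le>degree q. \<bar>coeff q i\<bar>)"
  proof (rule sum_mono)
    fix i
    have "\<bar>t\<bar> ^ i \<le> 1" using t by (simp add: power_le_one)
    then show "\<bar>coeff q i * t ^ i\<bar> \<le> \<bar>coeff q i\<bar>"
      by (simp add: abs_mult power_abs mult_left_le)
  qed
  finally show ?thesis .
qed

lemma tanh_abs_le: "\<bar>tanh (x::real)\<bar> \<le> 1"
  using tanh_real_bounds[of x] by auto

inductive cls :: "(real \<Rightarrow> real) \<Rightarrow> bool" where
  base: "cls (\<lambda>x. x ^ j * poly q (tanh x) * S x)"
| add: "cls f \<Longrightarrow> cls g \<Longrightarrow> cls (\<lambda>x. f x + g x)"

lemma cls_zero: "cls (\<lambda>x. 0)"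
  using cls.base[of 0 0] by simp

lemma cls_scale: "cls f \<Longrightarrow> cls (\<lambda>x. c * f x)"
proof (induction rule: cls.induct)
  case (base j q)
  have "cls (\<lambda>x. x ^ j * poly (smult c q) (tanh x) * S x)" by (rule cls.base)
  then show ?case by (simp add: mult_ac)
next
  case (add f g)
  then show ?case using cls.add[OF add.IH] by (simp add: distrib_left)
qed

lemma cls_diff: "cls f \<Longrightarrow> cls g \<Longrightarrow> cls (\<lambda>x. f x - g x)"
  using cls.add[OF _ cls_scale[of g "-1"]] by simp

lemma cls_sum: "(\<And>i. i \<in> A \<Longrightarrow> cls (f i)) \<Longrightarrow> cls (\<lambda>x. \<Sum>i\<in>A. f i x)"
proof (induction A rule: infinite_finite_induct)
  case (infinite A) then show ?case by (simp add: cls_zero)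
next
  case empty then show ?case by (simp add: cls_zero)
next
  case (insert a A) then show ?case by (simp add: cls.add)
qed

lemma cls_mult_x: "cls f \<Longrightarrow> cls (\<lambda>x. x * f x)"
proof (induction rule: cls.induct)
  case (base j q)
  have "cls (\<lambda>x. x ^ Suc j * poly q (tanh x) * S x)" by (rule cls.base)
  then show ?case by (simp add: mult_ac)
next
  case (add f g)
  then show ?case using cls.add[OF add.IH] by (simp add: distrib_left)
qed

lemma cls_mult_pow: "cls f \<Longrightarrow> cls (\<lambda>x. x ^ n * f x)"
  by (induction n) (auto dest: cls_mult_x simp: mult.assoc)

lemma cls_mult_tanh: "cls f \<Longrightarrow> cls (\<lambda>x. tanh x * f x)"
proof (induction rule: cls.induct)
  case (base j q)
  have "cls (\<lambda>x. x ^ j * poly ([:0,1:] * q) (tanh x) * S x)" by (rule cls.base)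
  then show ?case by (simp add: mult_ac)
next
  case (add f g)
  then show ?case using cls.add[OF add.IH] by (simp add: distrib_left)
qed

lemma base_deriv:
  "((\<lambda>x. x ^ j * poly q (tanh x) * S x) has_real_derivative
     (x ^ (j - Suc 0) * poly (smult (real j) q) (tanh x) * S x
      + x ^ j * poly (pderiv q * [:1,0,-1:] - [:0,2:] * q) (tanh x) * S x)) (at x)"
proof -
  have d1: "((\<lambda>x. x ^ j) has_real_derivative real j * x ^ (j - Suc 0)) (at x)" by (rule DERIV_pow)
  have d2: "((\<lambda>x. poly q (tanh x)) has_real_derivative poly (pderiv q) (tanh x) * S x) (at x)"
    by (rule DERIV_chain2[OF poly_DERIV deriv_tanh_real])
  have d3: "(S has_real_derivative (- 2 * tanh x * S x)) (at x)" by (rule deriv_S)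
  show ?thesis
    by (rule DERIV_cong[OF DERIV_mult[OF DERIV_mult[OF d1 d2] d3]]) (simp add: S_def algebra_simps power2_eq_square)
qed

lemma cls_deriv: "cls f \<Longrightarrow> \<exists>g. cls g \<and> (\<forall>x. (f has_real_derivative g x) (at x))"
proof (induction rule: cls.induct)
  case (base j q)
  show ?case
    using base_deriv[of j q] cls.add[OF cls.base cls.base] by blast
next
  case (add f g)
  then obtain f' g' where "cls f'" "cls g'" "\<forall>x. (f has_real_derivative f' x) (at x)"
    "\<forall>x. (g has_real_derivative g' x) (at x)" by blast
  then show ?case by (intro exI[of _ "\<lambda>x. f' x + g' x"]) (auto intro: cls.add DERIV_add)
qed

lemma cls_bound: "cls f \<Longrightarrow> \<exists>C. \<forall>x. \<bar>x\<bar> ^ m * \<bar>f x\<bar> \<le> C * W x"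
proof (induction rule: cls.induct)
  case (base j q)
  define B where "B = (\<Sum>i\<le>degree q. \<bar>coeff q i\<bar>)"
  have "\<bar>x\<bar> ^ m * \<bar>x ^ j * poly q (tanh x) * S x\<bar> \<le> (B * (2 * fact (m + j))) * W x" for x
  proof -
    have pb: "\<bar>poly q (tanh x)\<bar> \<le> B" unfolding B_def by (rule poly_bound[OF tanh_abs_le])
    have "\<bar>x\<bar> ^ m * \<bar>x ^ j * poly q (tanh x) * S x\<bar> = \<bar>poly q (tanh x)\<bar> * (\<bar>x\<bar> ^ (m + j) * S x)"
      using S_pos[of x] by (simp add: abs_mult power_abs power_add mult_ac)
    also have "\<dots> \<le> B * (2 * fact (m + j) * W x)"
      by (rule mult_mono[OF pb S_le_W]) (use S_pos[of x] B_def in auto)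
    finally show ?thesis by (simp add: mult_ac)
  qed
  then show ?case by blast
next
  case (add f g)
  then obtain C1 C2 where "\<forall>x. \<bar>x\<bar> ^ m * \<bar>f x\<bar> \<le> C1 * W x" "\<forall>x. \<bar>x\<bar> ^ m * \<bar>g x\<bar> \<le> C2 * W x"
    by blast
  then have "\<bar>x\<bar> ^ m * \<bar>f x + g x\<bar> \<le> (C1 + C2) * W x" for x
  proof -
    have "\<bar>x\<bar> ^ m * \<bar>f x + g x\<bar> \<le> \<bar>x\<bar> ^ m * \<bar>f x\<bar> + \<bar>x\<bar> ^ m * \<bar>g x\<bar>"
      by (simp add: abs_triangle_ineq distrib_left[symmetric] mult_left_mono)
    then show ?thesis using \<open>\<forall>x. \<bar>x\<bar> ^ m * \<bar>f x\<bar> \<le> C1 * W x\<close>[rule_format, of x]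
        \<open>\<forall>x. \<bar>x\<bar> ^ m * \<bar>g x\<bar> \<le> C2 * W x\<close>[rule_format, of x] by (simp add: distrib_right)
  qed
  then show ?case by blast
qed

lemma cls_deriv_fun: "cls f \<Longrightarrow> cls (deriv f) \<and> (\<forall>x. (f has_real_derivative deriv f x) (at x))"
proof -
  assume "cls f"
  then obtain g where g: "cls g" "\<forall>x. (f has_real_derivative g x) (at x)" using cls_deriv by blast
  then have "deriv f = g" by (auto intro!: ext DERIV_imp_deriv)
  then show ?thesis using g by simp
qed

lemma cls_derivs: "cls f \<Longrightarrow> cls ((deriv ^^ n) f)"
  by (induction n) (auto dest: cls_deriv_fun)

lemma W_le1: "W x \<le> 1"
  unfolding W_def S_def by simp

lemma cls_schwartz: "cls f \<Longrightarrow> schwartz f"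
  unfolding schwartz_def
proof (intro conjI allI)
  assume f: "cls f"
  fix n x
  have "cls ((deriv ^^ n) f)" by (rule cls_derivs[OF f])
  then have "((deriv ^^ n) f has_real_derivative deriv ((deriv ^^ n) f) x) (at x)"
    using cls_deriv_fun by blast
  then show "(deriv ^^ n) f differentiable (at x)"
    by (rule differentiableI[OF has_field_derivative_imp_has_derivative])
next
  assume f: "cls f"
  fix m n
  obtain C where C: "\<forall>x. \<bar>x\<bar> ^ m * \<bar>(deriv ^^ n) f x\<bar> \<le> C * W x"
    using cls_bound[OF cls_derivs[OF f]] by blast
  have "\<bar>x\<bar> ^ m * \<bar>(deriv ^^ n) f x\<bar> \<le> \<bar>C\<bar>" for x
  proof -
    have "C * W x \<le> \<bar>C\<bar> * W x" using W_pos[of x] by (intro mult_right_mono) auto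
    also have "\<dots> \<le> \<bar>C\<bar>" using W_le1[of x] W_pos[of x] by (simp add: mult_left_le)
    finally show ?thesis using C by (meson order_trans)
  qed
  then show "\<exists>C. \<forall>x. \<bar>x\<bar> ^ m * \<bar>(deriv ^^ n) f x\<bar> \<le> C" by blast
qed

lemma cls_cont: "cls f \<Longrightarrow> continuous_on UNIV f"
  using cls_deriv_fun by (blast intro: continuous_at_imp_continuous_on DERIV_isCont)

lemma cls_meas: "cls f \<Longrightarrow> f \<in> borel_measurable borel"
  by (rule borel_measurable_continuous_onI[OF cls_cont])

lemma W_deriv: "((\<lambda>x. 2 * tanh (x/2)) has_real_derivative W x) (at x)"
proof -
  have "((\<lambda>x. tanh (x/2)) has_real_derivative S (x/2) * (1/2)) (at x)"
    by (rule DERIV_chain2[OF deriv_tanh_real]) (auto intro!: derivative_eq_intros)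
  then have "((\<lambda>x. 2 * tanh (x/2)) has_real_derivative 2 * (S (x/2) * (1/2))) (at x)"
    by (rule DERIV_cmult)
  then show ?thesis by (simp add: W_def)
qed

lemma W_cont: "isCont W x"
proof -
  have "isCont S (x/2)" by (rule DERIV_isCont[OF deriv_S])
  then have "isCont (\<lambda>x. S (x/2)) x" using isCont_o2[where f="\<lambda>x. x/2" and g=S and a=x] \<open>isCont S (x/2)\<close> by simp
  then show ?thesis unfolding W_def[abs_def] .
qed

lemma ftc_R:
  fixes f F :: "real \<Rightarrow> real"
  assumes F: "\<And>x. (F has_real_derivative f x) (at x)"
  and f: "\<And>x. isCont f x" and nn: "\<And>x. 0 \<le> f x"
  and A: "(F \<longlongrightarrow> A) at_bot" and B: "(F \<longlongrightarrow> B) at_top"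
  shows "integrable lborel f" "integral\<^sup>L lborel f = B - A"
proof -
  have "set_integrable lborel (einterval (-\<infinity>) \<infinity>) f"
       "(LBINT x=-\<infinity>..\<infinity>. f x) = B - A"
    by (rule interval_integral_FTC_nonneg[where F=F], use assms in \<open>auto simp: ereal_tendsto_simps\<close>)+
  then show "integrable lborel f" "integral\<^sup>L lborel f = B - A"
    by (simp_all add: set_integrable_def interval_lebesgue_integral_def set_lebesgue_integral_def)
qed

lemma W_int: "integrable lborel W"
proof (rule ftc_R(1)[OF W_deriv W_cont])
  show "0 \<le> W x" for x using W_pos[of x] by simp
  have h: "filterlim (\<lambda>x::real. x/2) at_bot at_bot"
    by (auto intro!: filterlim_at_bot_lt simp: filterlim_at_bot)
  show "((\<lambda>x::real. 2 * tanh (x/2)) \<longlongrightarrow> 2 * (-1)) at_bot"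
    by (intro tendsto_mult tendsto_const filterlim_compose[OF tanh_real_at_bot h])
  have h2: "filterlim (\<lambda>x::real. x/2) at_top at_top"
    by (simp add: filterlim_at_top)
  show "((\<lambda>x::real. 2 * tanh (x/2)) \<longlongrightarrow> 2 * 1) at_top"
    by (intro tendsto_mult tendsto_const filterlim_compose[OF tanh_real_at_top h2])
qed

lemma cls_int: "cls f \<Longrightarrow> integrable lborel f"
proof -
  assume f: "cls f"
  obtain C where C: "\<forall>x. \<bar>x\<bar> ^ 0 * \<bar>f x\<bar> \<le> C * W x" using cls_bound[OF f] by blast
  show ?thesis
  proof (rule Bochner_Integration.integrable_bound[of _ "\<lambda>x. C * W x"])
    show "integrable lborel (\<lambda>x. C * W x)" using W_int by simp
    show "f \<in> borel_measurable lborel" using cls_meas[OF f] by simp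
    show "AE x in lborel. norm (f x) \<le> norm (C * W x)"
      using C by (auto intro!: AE_I2 order_trans[OF _ abs_ge_self])
  qed
qed

lemma cls_int_pow: "cls f \<Longrightarrow> integrable lborel (\<lambda>x. x ^ n * f x)"
  by (rule cls_int[OF cls_mult_pow])

definition Ut :: "real \<Rightarrow> real" where "Ut x = S x / 2"
definition U :: "real \<Rightarrow> real" where "U x = (1 + tanh x) / 2"

lemma cls_Ut: "cls Ut"
  using cls.base[of 0 "[:1/2:]"] unfolding Ut_def[abs_def] by simp

lemma cls_mult_U: "cls f \<Longrightarrow> cls (\<lambda>x. U x * f x)"
  using cls.add[OF cls_scale[of f "1/2"] cls_scale[OF cls_mult_tanh, of f "1/2"]]
  unfolding U_def by (simp add: field_simps)

lemma U_deriv: "(U has_real_derivative Ut x) (at x)"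
proof -
  have "((\<lambda>x. (1 + tanh x) / 2) has_real_derivative (0 + S x) / 2) (at x)"
    by (intro DERIV_cdivide DERIV_add DERIV_const deriv_tanh_real)
  then show ?thesis by (simp add: U_def[abs_def] Ut_def)
qed

lemma Ut_cont: "isCont Ut x"
  using cls_cont[OF cls_Ut] by (simp add: continuous_on_eq_continuous_at)

lemma Ut_pos: "Ut x > 0" using S_pos by (simp add: Ut_def)

lemma U_at_bot: "(U \<longlongrightarrow> 0) at_bot"
proof -
  have "((\<lambda>x::real. (1 + tanh x) / 2) \<longlongrightarrow> (1 + (-1)) / (2::real)) at_bot"
    by (rule tendsto_divide[OF tendsto_add[OF tendsto_const tanh_real_at_bot] tendsto_const]) simp
  then show ?thesis by (simp add: U_def[abs_def])
qed

lemma U_at_top: "(U \<longlongrightarrow> 1) at_top"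
proof -
  have "((\<lambda>x::real. (1 + tanh x) / 2) \<longlongrightarrow> (1 + 1) / (2::real)) at_top"
    by (rule tendsto_divide[OF tendsto_add[OF tendsto_const tanh_real_at_top] tendsto_const]) simp
  then show ?thesis by (simp add: U_def[abs_def])
qed

lemma Ut_integral: "integral\<^sup>L lborel Ut = 1"
  using ftc_R(2)[OF U_deriv Ut_cont _ U_at_bot U_at_top] Ut_pos by (simp add: less_imp_le)

lemma UUt_integral: "integral\<^sup>L lborel (\<lambda>x. 2 * U x * Ut x) = 1"
proof -
  have d: "((\<lambda>x. U x ^ 2) has_real_derivative 2 * U x * Ut x) (at x)" for x
    using DERIV_power[OF U_deriv[of x], of 2] by (simp add: mult_ac)
  have c: "isCont (\<lambda>x. 2 * U x * Ut x) x" for x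
    using cls_cont[OF cls_scale[OF cls_mult_U[OF cls_Ut], of 2]]
    by (simp add: continuous_on_eq_continuous_at mult_ac)
  have nn: "0 \<le> 2 * U x * Ut x" for x
    using Ut_pos[of x] tanh_real_bounds[of x] by (simp add: U_def)
  have bot: "((\<lambda>x. U x ^ 2) \<longlongrightarrow> 0) at_bot" using tendsto_power[OF U_at_bot, of 2] by simp
  have top: "((\<lambda>x. U x ^ 2) \<longlongrightarrow> 1) at_top" using tendsto_power[OF U_at_top, of 2] by simp
  show ?thesis using ftc_R(2)[OF d c nn bot top] by simp
qed

lemma primitive_Ut: "primitive Ut x = U x"
proof -
  have A: "((U \<circ> real_of_ereal) \<longlongrightarrow> 0) (at_right (-\<infinity>))"
    by (simp add: ereal_tendsto_simps U_at_bot)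
  have "(U \<longlongrightarrow> U x) (at x)" using DERIV_isCont[OF U_deriv[of x]] by (simp add: isCont_def)
  then have "(U \<longlongrightarrow> U x) (at_left x)" by (rule tendsto_within_subset) simp
  then have B: "((U \<circ> real_of_ereal) \<longlongrightarrow> U x) (at_left (ereal x))"
    by (simp add: ereal_tendsto_simps)
  have "(LBINT y=-\<infinity>..ereal x. Ut y) = U x - 0"
    by (rule interval_integral_FTC_nonneg(2)[where F=U, OF _ U_deriv Ut_cont _ A B])
       (auto intro!: AE_I2 less_imp_le[OF Ut_pos])
  then have e: "(LBINT y:{..<x}. Ut y) = U x"
    by (simp add: interval_lebesgue_integral_def)
  have "(LBINT y:{..x}. Ut y) = (LBINT y:{..<x}. Ut y)"
  proof (rule set_integral_cong_set)
    have [measurable]: "Ut \<in> borel_measurable lborel" using cls_meas[OF cls_Ut] by simp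
    show "set_borel_measurable lborel {..<x} Ut" "set_borel_measurable lborel {..x} Ut"
      unfolding set_borel_measurable_def by measurable
    show "AE y in lborel. (y \<in> {..<x}) = (y \<in> {..x})"
      by (rule AE_mp[OF AE_lborel_singleton[of x]]) (auto intro!: AE_I2)
  qed
  then show ?thesis using e by (simp add: primitive_def)
qed

locale linsp =
  fixes V :: "('a \<Rightarrow> real) set" and \<phi> :: "nat \<Rightarrow> ('a \<Rightarrow> real) \<Rightarrow> real"
  assumes zero: "(\<lambda>x. 0) \<in> V"
  and lin: "\<And>f g a b. f \<in> V \<Longrightarrow> g \<in> V \<Longrightarrow> (\<lambda>x. a * f x + b * g x) \<in> V"
  and philin: "\<And>i f g a b. f \<in> V \<Longrightarrow> g \<in> V \<Longrightarrow> \<phi> i (\<lambda>x. a * f x + b * g x) = a * \<phi> i f + b * \<phi> i g"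
begin

lemma sum_in: "finite A \<Longrightarrow> (\<And>j. j \<in> A \<Longrightarrow> h j \<in> V) \<Longrightarrow>
   (\<lambda>x. \<Sum>j\<in>A. a j * h j x) \<in> V \<and> (\<forall>i. \<phi> i (\<lambda>x. \<Sum>j\<in>A. a j * h j x) = (\<Sum>j\<in>A. a j * \<phi> i (h j)))"
proof (induction A rule: finite_induct)
  case empty
  have "\<phi> i (\<lambda>x. 0) = 0" for i
    using philin[OF zero zero, of i 0 0] by simp
  then show ?case using zero by simp
next
  case (insert k A)
  then have hk: "h k \<in> V" and IH: "(\<lambda>x. \<Sum>j\<in>A. a j * h j x) \<in> V"
    "\<forall>i. \<phi> i (\<lambda>x. \<Sum>j\<in>A. a j * h j x) = (\<Sum>j\<in>A. a j * \<phi> i (h j))" by auto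
  have e: "(\<lambda>x. \<Sum>j\<in>insert k A. a j * h j x) = (\<lambda>x. a k * h k x + 1 * (\<Sum>j\<in>A. a j * h j x))"
    using insert by simp
  have l1: "(\<lambda>x. a k * h k x + 1 * (\<Sum>j\<in>A. a j * h j x)) \<in> V" by (rule lin[OF hk IH(1)])
  have l2: "\<phi> i (\<lambda>x. a k * h k x + 1 * (\<Sum>j\<in>A. a j * h j x)) = a k * \<phi> i (h k) + 1 * \<phi> i (\<lambda>x. \<Sum>j\<in>A. a j * h j x)" for i
    by (rule philin[OF hk IH(1)])
  show ?case unfolding e using l1 l2 IH(2) insert by simp
qed

lemma dual_exists:
  "(\<And>c. \<forall>f\<in>V. (\<Sum>i<M. c i * \<phi> i f) = 0 \<Longrightarrow> \<forall>i<M. c i = 0) \<Longrightarrow>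
   \<exists>e. (\<forall>j<M. e j \<in> V) \<and> (\<forall>i<M. \<forall>j<M. \<phi> i (e j) = (if i = j then 1 else 0))"
proof (induction M)
  case 0
  then show ?case by auto
next
  case (Suc M)
  have indM: "\<forall>i<M. c i = 0" if c: "\<forall>f\<in>V. (\<Sum>i<M. c i * \<phi> i f) = 0" for c
  proof -
    have "\<forall>f\<in>V. (\<Sum>i<Suc M. (c(M := 0)) i * \<phi> i f) = 0"
      using c by (simp add: lessThan_Suc)
    then have "\<forall>i<Suc M. (c(M := 0)) i = 0" by (rule Suc.prems)
    then show ?thesis by (metis fun_upd_other less_Suc_eq nat_neq_iff)
  qed
  then obtain e where eV: "\<forall>j<M. e j \<in> V" and ed: "\<forall>i<M. \<forall>j<M. \<phi> i (e j) = (if i = j then 1 else 0)"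
    using Suc.IH by blast
  define proj where "proj g = (\<lambda>x. 1 * g x + (-1) * (\<Sum>j<M. \<phi> j g * e j x))" for g
  have projV: "g \<in> V \<Longrightarrow> proj g \<in> V" for g
    unfolding proj_def by (rule lin) (use sum_in[of "{..<M}" e] eV in auto)
  have phi_sum: "\<phi> i (\<lambda>x. \<Sum>j<M. \<phi> j g * e j x) = (\<Sum>j<M. \<phi> j g * \<phi> i (e j))" for i g
    using sum_in[of "{..<M}" e "\<lambda>j. \<phi> j g"] eV by auto
  have phi_proj: "g \<in> V \<Longrightarrow> \<phi> i (proj g) = \<phi> i g - (\<Sum>j<M. \<phi> j g * \<phi> i (e j))" for g i
    unfolding proj_def using philin[of g "\<lambda>x. \<Sum>j<M. \<phi> j g * e j x" i 1 "-1"] sum_in[of "{..<M}" e] eV phi_sum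
    by auto
  have phi_proj0: "g \<in> V \<Longrightarrow> i < M \<Longrightarrow> \<phi> i (proj g) = 0" for g i
  proof -
    assume g: "g \<in> V" and i: "i < M"
    have "(\<Sum>j<M. \<phi> j g * \<phi> i (e j)) = (\<Sum>j<M. if j = i then \<phi> j g else 0)"
      by (rule sum.cong) (use ed i in auto)
    also have "\<dots> = \<phi> i g" using i by simp
    finally show ?thesis using phi_proj[OF g] by simp
  qed
  have "\<exists>g\<in>V. \<phi> M (proj g) \<noteq> 0"
  proof (rule ccontr)
    assume "\<not> ?thesis"
    then have h: "\<forall>g\<in>V. \<phi> M g - (\<Sum>j<M. \<phi> j g * \<phi> M (e j)) = 0" using phi_proj by auto
    define c where "c i = (if i < M then - \<phi> M (e i) else 1)" for i
    have "\<forall>f\<in>V. (\<Sum>i<Suc M. c i * \<phi> i f) = 0"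
    proof
      fix f assume "f \<in> V"
      have "(\<Sum>i<Suc M. c i * \<phi> i f) = \<phi> M f + (\<Sum>i<M. - \<phi> M (e i) * \<phi> i f)"
        by (simp add: lessThan_Suc c_def)
      also have "\<dots> = \<phi> M f - (\<Sum>j<M. \<phi> j f * \<phi> M (e j))"
        by (simp add: sum_negf mult.commute)
      finally show "(\<Sum>i<Suc M. c i * \<phi> i f) = 0" using h \<open>f \<in> V\<close> by simp
    qed
    then have "c M = 0" using Suc.prems by blast
    then show False by (simp add: c_def)
  qed
  then obtain g where gV: "g \<in> V" and gn: "\<phi> M (proj g) \<noteq> 0" by blast
  define eM where "eM = (\<lambda>x. (1 / \<phi> M (proj g)) * proj g x + 0 * proj g x)"
  have eMV: "eM \<in> V" unfolding eM_def by (rule lin[OF projV projV]) (use gV in auto)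
  have phieM: "\<phi> i eM = (if i < M then 0 else if i = M then 1 else \<phi> i eM)" for i
    unfolding eM_def using philin[OF projV[OF gV] projV[OF gV], of i "1 / \<phi> M (proj g)" 0] gn phi_proj0[OF gV]
    by auto
  define e' where "e' j = (if j = M then eM else (\<lambda>x. 1 * e j x + (- \<phi> M (e j)) * eM x))" for j
  have e'V: "\<forall>j<Suc M. e' j \<in> V"
  proof (intro allI impI)
    fix j assume "j < Suc M"
    show "e' j \<in> V"
    proof (cases "j = M")
      case True then show ?thesis using eMV by (simp add: e'_def)
    next
      case False
      then have "e j \<in> V" using eV \<open>j < Suc M\<close> by simp
      from lin[OF this eMV, of 1 "- \<phi> M (e j)"] show ?thesis using False by (simp add: e'_def)
    qed
  qed
  have "\<forall>i<Suc M. \<forall>j<Suc M. \<phi> i (e' j) = (if i = j then 1 else 0)"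
  proof (intro allI impI)
    fix i j assume i: "i < Suc M" and j: "j < Suc M"
    show "\<phi> i (e' j) = (if i = j then 1 else 0)"
    proof (cases "j = M")
      case True
      then show ?thesis using phieM[of i] i by (auto simp: e'_def)
    next
      case False
      then have jM: "j < M" using j by simp
      have "\<phi> i (e' j) = \<phi> i (e j) - \<phi> M (e j) * \<phi> i eM"
        unfolding e'_def using False philin[of "e j" eM i 1 "- \<phi> M (e j)"] eV jM eMV by simp
      then show ?thesis using phieM[of i] i jM ed by (cases "i = M") auto
    qed
  qed
  then show ?case using e'V by blast
qed

lemma solve:
  assumes "\<And>c. \<forall>f\<in>V. (\<Sum>i<M. c i * \<phi> i f) = 0 \<Longrightarrow> \<forall>i<M. c i = 0"
  shows "\<exists>f\<in>V. \<forall>i<M. \<phi> i f = y i"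
proof -
  obtain e where eV: "\<forall>j<M. e j \<in> V" and ed: "\<forall>i<M. \<forall>j<M. \<phi> i (e j) = (if i = j then 1 else 0)"
    using dual_exists[OF assms] by blast
  have s: "(\<lambda>x. \<Sum>j<M. y j * e j x) \<in> V \<and> (\<forall>i. \<phi> i (\<lambda>x. \<Sum>j<M. y j * e j x) = (\<Sum>j<M. y j * \<phi> i (e j)))"
    by (rule sum_in) (use eV in auto)
  have "\<phi> i (\<lambda>x. \<Sum>j<M. y j * e j x) = y i" if i: "i < M" for i
  proof -
    have "(\<Sum>j<M. y j * \<phi> i (e j)) = (\<Sum>j<M. if j = i then y j else 0)"
      by (rule sum.cong) (use ed i in auto)
    then show ?thesis using s i by simp
  qed
  then show ?thesis using s by blast
qed

end

lemma int_lin: fixes F G :: "real \<Rightarrow> real" shows "integrable lborel F \<Longrightarrow> integrable lborel G \<Longrightarrow>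
  (LBINT x. a * F x + b * G x) = a * (LBINT x. F x) + b * (LBINT x. G x)"
  by (subst Bochner_Integration.integral_add) (auto intro: integrable_mult_right)

lemma cls_poly_mult: "cls f \<Longrightarrow> cls (\<lambda>x. poly r x * f x)"
proof -
  assume f: "cls f"
  have "cls (\<lambda>x. \<Sum>i\<le>degree r. coeff r i * (x ^ i * f x))"
    by (intro cls_sum cls_scale cls_mult_pow f)
  then show ?thesis by (simp add: poly_altdef sum_distrib_left sum_distrib_right mult_ac)
qed

lemma poly_sum_monom: "poly (\<Sum>n<N. monom (c n) n) (x::real) = (\<Sum>n<N. c n * x ^ n)"
  by (simp add: poly_sum poly_monom)

lemma coeff_sum_monom': "coeff (\<Sum>n<N. monom (c n) n) i = (if i < N then c i else 0)"
  by (simp add: coeff_sum)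

lemma poly_eq0_coeffs: "(\<forall>x::real. (\<Sum>n<N. c n * x ^ n) = 0) \<Longrightarrow> \<forall>n<N. c n = 0"
proof -
  assume h: "\<forall>x::real. (\<Sum>n<N. c n * x ^ n) = 0"
  then have "\<forall>x. poly (\<Sum>n<N. monom (c n) n) x = 0" by (simp add: poly_sum_monom)
  then have "(\<Sum>n<N. monom (c n) n) = 0" using poly_all_0_iff_0 by blast
  then show ?thesis using coeff_sum_monom'[of c N] by (metis coeff_0)
qed

lemma poly_tendsto0_imp0:
  fixes R :: "real poly"
  assumes "\<forall>x. \<bar>x\<bar> * \<bar>poly R x\<bar> \<le> C"
  shows "R = 0"
proof (rule ccontr)
  assume R: "R \<noteq> 0"
  obtain a R' where RR: "R = pCons a R'" by (cases R)
  have "\<exists>d>0. \<exists>r. \<forall>x. r \<le> \<bar>x\<bar> \<longrightarrow> d \<le> \<bar>poly R x\<bar>"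
  proof (cases "R' = 0")
    case True
    then have "a \<noteq> 0" using R RR by simp
    then show ?thesis using True RR by (intro exI[of _ "\<bar>a\<bar>"]) auto
  next
    case False
    from poly_infinity[OF False, of 1 a] show ?thesis using RR by (intro exI[of _ 1]) auto
  qed
  then obtain d r where d: "d > 0" and dr: "\<forall>x. r \<le> \<bar>x\<bar> \<longrightarrow> d \<le> \<bar>poly R x\<bar>" by blast
  define x where "x = max r (\<bar>C\<bar> / d + 1)"
  have x1: "\<bar>x\<bar> \<ge> r" "\<bar>x\<bar> \<ge> \<bar>C\<bar> / d + 1" unfolding x_def by auto
  have "d \<le> \<bar>poly R x\<bar>" using dr x1 by auto
  then have "\<bar>x\<bar> * d \<le> \<bar>x\<bar> * \<bar>poly R x\<bar>" by (simp add: mult_left_mono)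
  also have "\<dots> \<le> C" using assms by simp
  finally have "\<bar>x\<bar> * d \<le> \<bar>C\<bar>" by simp
  moreover have "(\<bar>C\<bar> / d + 1) * d \<le> \<bar>x\<bar> * d" using x1 d by (intro mult_right_mono) auto
  ultimately have "(\<bar>C\<bar> / d + 1) * d \<le> \<bar>C\<bar>" by linarith
  then show False using d by (simp add: field_simps) (meson mult_pos_pos not_le)
qed

lemma indep_PQ:
  assumes h: "\<forall>x. (\<Sum>n<N. a n * x ^ n) + (\<Sum>n<N. b n * x ^ n) * U x = 0"
  shows "(\<forall>n<N. a n = 0) \<and> (\<forall>n<N. b n = 0)"
proof -
  define p where "p = (\<Sum>n<N. monom (a n) n)"
  define q where "q = (\<Sum>n<N. monom (b n) n)"
  have h': "poly p x + poly q x * U x = 0" for x using h by (simp add: p_def q_def poly_sum_monom)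
  have "((\<lambda>x. poly p x + poly q x * U x) has_real_derivative
          poly (pderiv p) x + (poly (pderiv q) x * U x + poly q x * Ut x)) (at x)" for x
    using DERIV_add[OF poly_DERIV[of p x] DERIV_mult[OF poly_DERIV[of q x] U_deriv[of x]]] by (simp add: ac_simps)
  moreover have "(\<lambda>x. poly p x + poly q x * U x) = (\<lambda>x. 0)" using h' by auto
  ultimately have d: "poly (pderiv p) x + (poly (pderiv q) x * U x + poly q x * Ut x) = 0" for x
    by (metis DERIV_const DERIV_unique)
  define R where "R = pderiv q * p - q * pderiv p"
  have R: "poly R x = poly (q ^ 2) x * Ut x" for x
  proof -
    have e1: "poly p x = - (poly q x * U x)" using h'[of x] by (simp add: eq_neg_iff_add_eq_0)
    have e2: "poly (pderiv p) x = - (poly (pderiv q) x * U x + poly q x * Ut x)"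
      using d[of x] by (simp add: eq_neg_iff_add_eq_0)
    show ?thesis by (simp add: R_def e1 e2 power2_eq_square algebra_simps)
  qed
  have "cls (\<lambda>x. poly (q ^ 2) x * Ut x)" by (rule cls_poly_mult[OF cls_Ut])
  then obtain C where C: "\<forall>x. \<bar>x\<bar> ^ 1 * \<bar>poly (q ^ 2) x * Ut x\<bar> \<le> C * W x" using cls_bound by blast
  have "\<bar>x\<bar> * \<bar>poly R x\<bar> \<le> \<bar>C\<bar>" for x
  proof -
    have "C * W x \<le> \<bar>C\<bar> * W x" using W_pos[of x] by (intro mult_right_mono) auto
    also have "\<dots> \<le> \<bar>C\<bar>" using W_le1[of x] W_pos[of x] by (simp add: mult_left_le)
    finally show ?thesis using C[rule_format, of x] R[of x] by simp
  qed
  then have "R = 0" by (intro poly_tendsto0_imp0[of R "\<bar>C\<bar>"]) blast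
  then have "poly (q ^ 2) x * Ut x = 0" for x using R[of x] by simp
  then have "poly q x = 0" for x using Ut_pos[of x] by (metis less_irrefl mult_eq_0_iff power_eq_0_iff poly_power)
  then have q0: "\<forall>x. (\<Sum>n<N. b n * x ^ n) = 0" by (simp add: q_def poly_sum_monom)
  then have "\<forall>x. (\<Sum>n<N. a n * x ^ n) = 0" using h by simp
  then show ?thesis using q0 poly_eq0_coeffs by blast
qed

definition phi :: "nat \<Rightarrow> nat \<Rightarrow> (real \<Rightarrow> real) \<Rightarrow> real" where
  "phi N i f = (if i < N then LBINT x. x ^ i * f x else LBINT x. x ^ (i - N) * (U x * f x))"

lemma linsp_cls: "linsp {f. cls f} (phi N)"
proof
  show "(\<lambda>x. 0) \<in> {f. cls f}" using cls_zero by simp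
  fix f g :: "real \<Rightarrow> real" and a b :: real
  assume f: "f \<in> {f. cls f}" and g: "g \<in> {f. cls f}"
  then show "(\<lambda>x. a * f x + b * g x) \<in> {f. cls f}" by (auto intro!: cls.add cls_scale)
  fix i
  show "phi N i (\<lambda>x. a * f x + b * g x) = a * phi N i f + b * phi N i g"
  proof (cases "i < N")
    case True
    have "(LBINT x. x ^ i * (a * f x + b * g x)) = (LBINT x. a * (x ^ i * f x) + b * (x ^ i * g x))"
      by (simp add: algebra_simps)
    also have "\<dots> = a * (LBINT x. x ^ i * f x) + b * (LBINT x. x ^ i * g x)"
      by (rule int_lin) (use f g cls_int_pow in auto)
    finally show ?thesis using True by (simp add: phi_def)
  next
    case False
    have "(LBINT x. x ^ (i - N) * (U x * (a * f x + b * g x))) =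
          (LBINT x. a * (x ^ (i - N) * (U x * f x)) + b * (x ^ (i - N) * (U x * g x)))"
      by (simp add: algebra_simps)
    also have "\<dots> = a * (LBINT x. x ^ (i - N) * (U x * f x)) + b * (LBINT x. x ^ (i - N) * (U x * g x))"
      by (rule int_lin) (use f g cls_int_pow cls_mult_U in auto)
    finally show ?thesis using False by (simp add: phi_def)
  qed
qed

lemma sum_split_add: "(\<Sum>i<m+(n::nat). g i) = (\<Sum>i<m. g i) + (\<Sum>i<n. g (m + i))"
  by (induction n) (simp_all add: add.assoc)

lemma phi_sum:
  assumes f: "cls f"
  shows "(\<Sum>i<N+N. c i * phi N i f) =
    (LBINT x. ((\<Sum>n<N. c n * x ^ n) + (\<Sum>n<N. c (N + n) * x ^ n) * U x) * f x)"
proof -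
  have i1: "integrable lborel (\<lambda>x. c n * (x ^ n * f x))" for n
    using cls_int_pow[OF f] by simp
  have i2: "integrable lborel (\<lambda>x. c (N + n) * (x ^ n * (U x * f x)))" for n
    using cls_int_pow[OF cls_mult_U[OF f]] by simp
  have "(\<Sum>i<N+N. c i * phi N i f) = (\<Sum>n<N. c n * (LBINT x. x ^ n * f x))
        + (\<Sum>n<N. c (N + n) * (LBINT x. x ^ n * (U x * f x)))"
    by (simp add: sum_split_add phi_def)
  also have "\<dots> = (LBINT x. (\<Sum>n<N. c n * (x ^ n * f x))) + (LBINT x. (\<Sum>n<N. c (N + n) * (x ^ n * (U x * f x))))"
    using Bochner_Integration.integral_sum[where I="{..<N}" and M=lborel and f="\<lambda>n x. c n * (x ^ n * f x)"]
      Bochner_Integration.integral_sum[where I="{..<N}" and M=lborel and f="\<lambda>n x. c (N + n) * (x ^ n * (U x * f x))"] i1 i2 by simp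
  also have "\<dots> = (LBINT x. (\<Sum>n<N. c n * (x ^ n * f x)) + (\<Sum>n<N. c (N + n) * (x ^ n * (U x * f x))))"
    by (rule Bochner_Integration.integral_add[symmetric]) (use i1 i2 in auto)
  also have "\<dots> = (LBINT x. ((\<Sum>n<N. c n * x ^ n) + (\<Sum>n<N. c (N + n) * x ^ n) * U x) * f x)"
    by (rule arg_cong[where f="integral\<^sup>L lborel"], rule ext) (simp add: distrib_left sum_distrib_left mult_ac)
  finally show ?thesis .
qed

lemma cont_zero:
  fixes g :: "real \<Rightarrow> real"
  assumes c: "continuous_on UNIV g" and ae: "AE x in lborel. g x = 0"
  shows "g x = 0"
proof -
  have "closed {x. g x = 0}" using c by (intro closed_Collect_eq) auto
  moreover have "AE x in lebesgue. x \<in> {x. g x = 0}" using AE_completion[OF ae] by simp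
  ultimately show ?thesis using mem_closed_if_AE_lebesgue by blast
qed

lemma indep_phi:
  assumes h: "\<forall>f\<in>{f. cls f}. (\<Sum>i<N+N. c i * phi N i f) = 0"
  shows "\<forall>i<N+N. c i = 0"
proof -
  define P where "P x = (\<Sum>n<N. c n * x ^ n)" for x :: real
  define Q where "Q x = (\<Sum>n<N. c (N + n) * x ^ n)" for x :: real
  have clsP: "cls (\<lambda>x. P x * Ut x)"
    unfolding P_def sum_distrib_right by (intro cls_sum) (auto simp: mult.assoc intro!: cls_scale cls_mult_pow cls_Ut)
  have clsQ: "cls (\<lambda>x. Q x * U x * Ut x)"
    unfolding Q_def sum_distrib_right
    by (intro cls_sum) (auto simp: mult.assoc intro!: cls_scale cls_mult_pow cls_mult_U cls_Ut)
  define f0 where "f0 x = (P x + Q x * U x) * Ut x" for x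
  have f0: "cls f0" unfolding f0_def distrib_right using cls.add[OF clsP clsQ] .
  define g where "g x = (P x + Q x * U x) * f0 x" for x
  have g: "cls g"
  proof -
    have "cls (\<lambda>x. P x * f0 x + Q x * (U x * f0 x))"
      unfolding P_def Q_def sum_distrib_right
      by (intro cls.add cls_sum) (auto simp: mult.assoc intro!: cls_scale cls_mult_pow cls_mult_U f0)
    then show ?thesis unfolding g_def by (simp add: algebra_simps)
  qed
  have "(LBINT x. g x) = 0" using h f0 phi_sum[OF f0, where c=c and N=N] by (simp add: g_def P_def Q_def)
  moreover have nn: "0 \<le> g x" for x
  proof -
    have "g x = (P x + Q x * U x)^2 * Ut x" by (simp add: g_def f0_def power2_eq_square)
    then show ?thesis using Ut_pos[of x] by simp
  qed
  ultimately have "AE x in lborel. g x = 0"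
    using integral_nonneg_eq_0_iff_AE[OF cls_int[OF g]] by simp
  then have "g x = 0" for x by (rule cont_zero[OF cls_cont[OF g]])
  then have "P x + Q x * U x = 0" for x using Ut_pos[of x] by (simp add: g_def f0_def) (metis less_irrefl)
  then have "(\<forall>n<N. c n = 0) \<and> (\<forall>n<N. c (N + n) = 0)"
    by (intro indep_PQ) (simp add: P_def Q_def)
  then show ?thesis by (metis add_diff_inverse_nat nat_add_left_cancel_less)
qed

lemma exists_phi: "\<exists>f. cls f \<and> (\<forall>i<N+N. phi N i f = y i)"
proof -
  interpret linsp "{f. cls f}" "phi N" by (rule linsp_cls)
  have "\<exists>f\<in>{f. cls f}. \<forall>i<N+N. phi N i f = y i"
    by (rule solve) (rule indep_phi)
  then show ?thesis by auto
qed

lemma schwartz_DERIV: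
  assumes "schwartz \<psi>"
  shows "((deriv ^^ m) \<psi> has_real_derivative (deriv ^^ Suc m) \<psi> t) (at t)"
proof -
  have "(deriv ^^ m) \<psi> differentiable (at t)" using assms unfolding schwartz_def by blast
  then show ?thesis by (simp add: DERIV_deriv_iff_real_differentiable)
qed

lemma schwartz_bounded:
  assumes "schwartz \<psi>"
  shows "\<exists>B. \<forall>x. \<bar>(deriv ^^ n) \<psi> x\<bar> \<le> B"
proof -
  obtain C where "\<forall>x. \<bar>x\<bar> ^ 0 * \<bar>(deriv ^^ n) \<psi> x\<bar> \<le> C"
    using assms unfolding schwartz_def by blast
  then show ?thesis by auto
qed

lemma schwartz_cont: "schwartz \<psi> \<Longrightarrow> continuous_on UNIV \<psi>"
  using schwartz_DERIV[of \<psi> 0] by (auto intro!: continuous_at_imp_continuous_on DERIV_isCont)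

lemma taylor_bound:
  assumes psi: "schwartz \<psi>"
  shows "\<exists>B. \<forall>a h. \<bar>\<psi> (a + h) - (\<Sum>m<n. (deriv ^^ m) \<psi> a / fact m * h ^ m)\<bar> \<le> B * \<bar>h\<bar> ^ n"
proof -
  obtain B where B: "\<forall>x. \<bar>(deriv ^^ n) \<psi> x\<bar> \<le> B" using schwartz_bounded[OF psi] by blast
  have "\<bar>\<psi> (a + h) - (\<Sum>m<n. (deriv ^^ m) \<psi> a / fact m * h ^ m)\<bar> \<le> (B / fact n) * \<bar>h\<bar> ^ n" for a h
  proof (cases "n = 0")
    case True
    then show ?thesis using B by simp
  next
    case False
    show ?thesis
    proof (cases "h = 0")
      case True
      have "(\<Sum>m<n. (deriv ^^ m) \<psi> a / fact m * h ^ m) = (\<Sum>m<n. if m = 0 then \<psi> a else 0)"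
        by (rule sum.cong) (auto simp: True)
      also have "\<dots> = \<psi> a" using False by simp
      finally show ?thesis using True False by (simp add: power_0_left)
    next
      case hne: False
      obtain t where "\<psi> (a + h) = (\<Sum>m<n. (deriv ^^ m) \<psi> a / fact m * (a + h - a) ^ m)
          + (deriv ^^ n) \<psi> t / fact n * (a + h - a) ^ n"
        using Taylor[of n "\<lambda>m. (deriv ^^ m) \<psi>" \<psi> "min a (a+h)" "max a (a+h)" a "a + h"]
          schwartz_DERIV[OF psi] False hne by auto
      then have "\<bar>\<psi> (a + h) - (\<Sum>m<n. (deriv ^^ m) \<psi> a / fact m * h ^ m)\<bar> = \<bar>(deriv ^^ n) \<psi> t\<bar> / fact n * \<bar>h\<bar> ^ n"
        by (simp add: abs_mult power_abs)
      also have "\<dots> \<le> B / fact n * \<bar>h\<bar> ^ n"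
        using B by (intro mult_right_mono divide_right_mono) auto
      finally show ?thesis .
    qed
  qed
  then show ?thesis by blast
qed

lemma expansion_bound:
  assumes G: "cls G" and psi: "schwartz \<psi>"
  shows "\<exists>K. \<forall>\<epsilon>>0. \<bar>(LBINT y. G y * \<psi> (a + \<epsilon> * y))
      - (\<Sum>j<n. (deriv ^^ j) \<psi> a / fact j * (LBINT y. y ^ j * G y) * \<epsilon> ^ j)\<bar> \<le> K * \<epsilon> ^ n"
proof -
  obtain B where B: "\<forall>a h. \<bar>\<psi> (a + h) - (\<Sum>m<n. (deriv ^^ m) \<psi> a / fact m * h ^ m)\<bar> \<le> B * \<bar>h\<bar> ^ n"
    using taylor_bound[OF psi] by blast
  obtain B0 where B0: "\<forall>x. \<bar>(deriv ^^ 0) \<psi> x\<bar> \<le> B0" using schwartz_bounded[OF psi] by blast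
  have psim: "\<psi> \<in> borel_measurable borel" by (rule borel_measurable_continuous_onI[OF schwartz_cont[OF psi]])
  have Gm: "G \<in> borel_measurable borel" by (rule cls_meas[OF G])
  have Gi: "integrable lborel G" by (rule cls_int[OF G])
  have Gj: "integrable lborel (\<lambda>y. y ^ j * G y)" for j by (rule cls_int_pow[OF G])
  define K where "K = B * (LBINT y. \<bar>y\<bar> ^ n * \<bar>G y\<bar>)"
  have "\<bar>(LBINT y. G y * \<psi> (a + \<epsilon> * y))
      - (\<Sum>j<n. (deriv ^^ j) \<psi> a / fact j * (LBINT y. y ^ j * G y) * \<epsilon> ^ j)\<bar> \<le> K * \<epsilon> ^ n"
    if e: "\<epsilon> > 0" for \<epsilon>
  proof -
    have i1: "integrable lborel (\<lambda>y. G y * \<psi> (a + \<epsilon> * y))"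
    proof (rule Bochner_Integration.integrable_bound[of _ "\<lambda>y. B0 * \<bar>G y\<bar>"])
      show "integrable lborel (\<lambda>y. B0 * \<bar>G y\<bar>)" using Gi by auto
      show "(\<lambda>y. G y * \<psi> (a + \<epsilon> * y)) \<in> borel_measurable lborel"
        using Gm psim by measurable
      show "AE y in lborel. norm (G y * \<psi> (a + \<epsilon> * y)) \<le> norm (B0 * \<bar>G y\<bar>)"
      proof (rule AE_I2)
        fix y
        have "\<bar>G y\<bar> * \<bar>\<psi> (a + \<epsilon> * y)\<bar> \<le> \<bar>G y\<bar> * B0" using B0 by (intro mult_left_mono) auto
        moreover have "\<bar>G y\<bar> * B0 \<le> \<bar>B0\<bar> * \<bar>G y\<bar>" by (simp add: mult.commute mult_right_mono)
        ultimately show "norm (G y * \<psi> (a + \<epsilon> * y)) \<le> norm (B0 * \<bar>G y\<bar>)"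
          by (simp add: abs_mult)
      qed
    qed
    have i2: "integrable lborel (\<lambda>y. (\<Sum>j<n. (deriv ^^ j) \<psi> a / fact j * \<epsilon> ^ j * (y ^ j * G y)))"
      using Gj by auto
    have isum: "(\<Sum>j<n. (deriv ^^ j) \<psi> a / fact j * (LBINT y. y ^ j * G y) * \<epsilon> ^ j)
        = (LBINT y. (\<Sum>j<n. (deriv ^^ j) \<psi> a / fact j * \<epsilon> ^ j * (y ^ j * G y)))"
    proof -
      have s: "(LBINT y. (\<Sum>j<n. (deriv ^^ j) \<psi> a / fact j * \<epsilon> ^ j * (y ^ j * G y)))
          = (\<Sum>j<n. (LBINT y. (deriv ^^ j) \<psi> a / fact j * \<epsilon> ^ j * (y ^ j * G y)))"
        by (rule Bochner_Integration.integral_sum) (simp add: Gj)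
      show ?thesis unfolding s by (simp only: integral_mult_right_zero) (simp add: mult_ac)
    qed
    have diffeq: "(LBINT y. G y * \<psi> (a + \<epsilon> * y)) - (\<Sum>j<n. (deriv ^^ j) \<psi> a / fact j * (LBINT y. y ^ j * G y) * \<epsilon> ^ j)
        = (LBINT y. G y * (\<psi> (a + \<epsilon> * y) - (\<Sum>j<n. (deriv ^^ j) \<psi> a / fact j * (\<epsilon> * y) ^ j)))"
      unfolding isum
      by (subst Bochner_Integration.integral_diff[OF i1 i2, symmetric])
         (auto intro!: arg_cong[where f="integral\<^sup>L lborel"] simp: right_diff_distrib sum_distrib_left power_mult_distrib mult_ac)
    have ib: "integrable lborel (\<lambda>y. \<bar>y\<bar> ^ n * \<bar>G y\<bar>)"
      using Bochner_Integration.integrable_abs[OF Gj[of n]] by (simp add: abs_mult power_abs)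
    have "\<bar>LBINT y. G y * (\<psi> (a + \<epsilon> * y) - (\<Sum>j<n. (deriv ^^ j) \<psi> a / fact j * (\<epsilon> * y) ^ j))\<bar>
        \<le> (LBINT y. B * \<epsilon> ^ n * (\<bar>y\<bar> ^ n * \<bar>G y\<bar>))"
    proof (rule integral_abs_bound_integral)
      have eqf: "(\<lambda>y. G y * (\<psi> (a + \<epsilon> * y) - (\<Sum>j<n. (deriv ^^ j) \<psi> a / fact j * (\<epsilon> * y) ^ j)))
          = (\<lambda>y. G y * \<psi> (a + \<epsilon> * y) - (\<Sum>j<n. (deriv ^^ j) \<psi> a / fact j * \<epsilon> ^ j * (y ^ j * G y)))"
        by (rule ext) (simp add: right_diff_distrib sum_distrib_left power_mult_distrib mult_ac)
      show "integrable lborel (\<lambda>y. G y * (\<psi> (a + \<epsilon> * y) - (\<Sum>j<n. (deriv ^^ j) \<psi> a / fact j * (\<epsilon> * y) ^ j)))"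
        unfolding eqf by (rule Bochner_Integration.integrable_diff[OF i1 i2])
      show "integrable lborel (\<lambda>y. B * \<epsilon> ^ n * (\<bar>y\<bar> ^ n * \<bar>G y\<bar>))" using ib by auto
      fix y
      have "\<bar>\<psi> (a + \<epsilon> * y) - (\<Sum>j<n. (deriv ^^ j) \<psi> a / fact j * (\<epsilon> * y) ^ j)\<bar> \<le> B * \<bar>\<epsilon> * y\<bar> ^ n"
        using B by blast
      then have "\<bar>G y\<bar> * \<bar>\<psi> (a + \<epsilon> * y) - (\<Sum>j<n. (deriv ^^ j) \<psi> a / fact j * (\<epsilon> * y) ^ j)\<bar>
          \<le> \<bar>G y\<bar> * (B * \<bar>\<epsilon> * y\<bar> ^ n)" by (intro mult_left_mono) auto
      then show "\<bar>G y * (\<psi> (a + \<epsilon> * y) - (\<Sum>j<n. (deriv ^^ j) \<psi> a / fact j * (\<epsilon> * y) ^ j))\<bar>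
        \<le> B * \<epsilon> ^ n * (\<bar>y\<bar> ^ n * \<bar>G y\<bar>)"
        using e by (simp add: abs_mult power_mult_distrib mult_ac)
    qed
    also have "\<dots> = K * \<epsilon> ^ n" by (simp only: integral_mult_right_zero) (simp add: K_def mult_ac)
    finally show ?thesis using diffeq by simp
  qed
  then show ?thesis by blast
qed

lemma sum_int_interval:
  fixes \<xi> :: "int \<Rightarrow> real" and c :: "nat \<Rightarrow> real" and p M :: int
  assumes M: "M > 0"
  and xi: "\<And>k. \<xi> k = (if k \<ge> 0 then c (nat k) else 0)"
  and van: "\<And>j. int j < p \<Longrightarrow> c j = 0"
  shows "(\<Sum>k\<in>{p..<M}. \<xi> k * \<epsilon> powi k) = (\<Sum>j<nat M. c j * \<epsilon> ^ j)"
proof -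
  have "(\<Sum>j<nat M. c j * \<epsilon> ^ j) = (\<Sum>k\<in>int ` {0..<nat M}. \<xi> k * \<epsilon> powi k)"
    by (subst sum.reindex) (auto simp: xi atLeast0LessThan)
  also have "int ` {0..<nat M} = {0..<M}" using M by (simp add: image_int_atLeastLessThan)
  finally have e1: "(\<Sum>j<nat M. c j * \<epsilon> ^ j) = (\<Sum>k\<in>{0..<M}. \<xi> k * \<epsilon> powi k)" .
  have e2: "(\<Sum>k\<in>{0..<M}. \<xi> k * \<epsilon> powi k) = (\<Sum>k\<in>{min p 0..<M}. \<xi> k * \<epsilon> powi k)"
    by (rule sum.mono_neutral_left) (auto simp: xi)
  have e3: "(\<Sum>k\<in>{p..<M}. \<xi> k * \<epsilon> powi k) = (\<Sum>k\<in>{min p 0..<M}. \<xi> k * \<epsilon> powi k)"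
  proof (rule sum.mono_neutral_left)
    show "\<forall>k\<in>{min p 0..<M} - {p..<M}. \<xi> k * \<epsilon> powi k = 0"
    proof
      fix k assume k: "k \<in> {min p 0..<M} - {p..<M}"
      then have "k < p" by auto
      show "\<xi> k * \<epsilon> powi k = 0"
      proof (cases "k \<ge> 0")
        case True
        then have "int (nat k) < p" using \<open>k < p\<close> by simp
        then show ?thesis using True by (simp add: xi van)
      next
        case False then show ?thesis by (simp add: xi)
      qed
    qed
  qed auto
  show ?thesis using e1 e2 e3 by simp
qed

lemma zero_up_to_from_bounds:
  fixes F :: "real \<Rightarrow> real" and c :: "nat \<Rightarrow> real"
  assumes H: "\<And>n::nat. \<exists>K. \<forall>\<epsilon>>0. \<bar>F \<epsilon> - (\<Sum>j<n. c j * \<epsilon> ^ j)\<bar> \<le> K * \<epsilon> ^ n"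
  and van: "\<And>j. int j < p \<Longrightarrow> c j = 0"
  shows "zero_up_to p F"
proof -
  define \<xi> where "\<xi> k = (if k \<ge> 0 then c (nat k) else 0)" for k :: int
  have "expands_as F p \<xi>"
    unfolding expands_as_def
  proof
    fix n :: nat
    define M where "M = p + int n"
    show "(\<lambda>\<epsilon>. F \<epsilon> - (\<Sum>k\<in>{p..<p + int n}. \<xi> k * \<epsilon> powi k)) \<in> O[at_right 0](\<lambda>\<epsilon>. \<epsilon> powi (p + int n))"
    proof (cases "M > 0")
      case True
      obtain K where K: "\<forall>\<epsilon>>0. \<bar>F \<epsilon> - (\<Sum>j<nat M. c j * \<epsilon> ^ j)\<bar> \<le> K * \<epsilon> ^ nat M"
        using H by blast
      have "eventually (\<lambda>\<epsilon>. norm (F \<epsilon> - (\<Sum>k\<in>{p..<M}. \<xi> k * \<epsilon> powi k)) \<le> K * norm (\<epsilon> powi M)) (at_right 0)"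
        unfolding eventually_at_right_field
      proof (intro exI[of _ 1] conjI allI impI)
        fix \<epsilon> :: real assume e: "\<epsilon> > 0"
        have pw: "\<epsilon> powi M = \<epsilon> ^ nat M" using True by (simp add: power_int_def)
        show "norm (F \<epsilon> - (\<Sum>k\<in>{p..<M}. \<xi> k * \<epsilon> powi k)) \<le> K * norm (\<epsilon> powi M)"
          using K e sum_int_interval[OF True \<xi>_def van, where \<epsilon>=\<epsilon>] pw by simp
      qed simp
      then show ?thesis unfolding M_def by (rule bigoI)
    next
      case False
      have s0: "(\<Sum>k\<in>{p..<M}. \<xi> k * \<epsilon> powi k) = 0" for \<epsilon>
        by (rule sum.neutral) (use False in \<open>auto simp: \<xi>_def\<close>)
      obtain K where K: "\<forall>\<epsilon>>0. \<bar>F \<epsilon> - (\<Sum>j<0. c j * \<epsilon> ^ j)\<bar> \<le> K * \<epsilon> ^ 0"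
        using H by blast
      have "eventually (\<lambda>\<epsilon>. norm (F \<epsilon> - (\<Sum>k\<in>{p..<M}. \<xi> k * \<epsilon> powi k)) \<le> \<bar>K\<bar> * norm (\<epsilon> powi M)) (at_right 0)"
        unfolding eventually_at_right_field
      proof (intro exI[of _ 1] conjI allI impI)
        fix \<epsilon> :: real assume e: "\<epsilon> > 0" "\<epsilon> < 1"
        have "1 \<le> \<epsilon> powi M"
        proof -
          have "\<epsilon> ^ nat (- M) \<le> 1" using e by (simp add: power_le_one)
          moreover have "\<epsilon> powi M = 1 / \<epsilon> ^ nat (- M)" using False by (simp add: power_int_def power_inverse divide_inverse)
          moreover have "\<epsilon> ^ nat (- M) > 0" using e by simp
          ultimately show ?thesis by simp
        qed
        then have "\<bar>K\<bar> \<le> \<bar>K\<bar> * norm (\<epsilon> powi M)" by (simp add: mult_le_cancel_left1)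
        moreover have "\<bar>F \<epsilon>\<bar> \<le> \<bar>K\<bar>" using K e by force
        ultimately show "norm (F \<epsilon> - (\<Sum>k\<in>{p..<M}. \<xi> k * \<epsilon> powi k)) \<le> \<bar>K\<bar> * norm (\<epsilon> powi M)"
          using s0 by simp
      qed simp
      then show ?thesis unfolding M_def by (rule bigoI)
    qed
  qed
  then show ?thesis unfolding zero_up_to_def by blast
qed

lemma cls_interval_int: "cls f \<Longrightarrow> interval_lebesgue_integrable lborel a b f"
proof -
  assume f: "cls f"
  have "integrable lborel (\<lambda>x. indicator (einterval a b) x *\<^sub>R f x)" for a b
    by (rule integrable_mult_indicator) (auto intro: cls_int[OF f])
  then show ?thesis unfolding interval_lebesgue_integrable_def set_integrable_def by simp
qed

lemma prim_eq: "cls f \<Longrightarrow> primitive f y = (LBINT z=-\<infinity>..ereal y. f z)"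
proof -
  assume f: "cls f"
  have "(LBINT z:{..y}. f z) = (LBINT z:{..<y}. f z)"
  proof (rule set_integral_cong_set)
    have [measurable]: "f \<in> borel_measurable lborel" using cls_meas[OF f] by simp
    show "set_borel_measurable lborel {..<y} f" "set_borel_measurable lborel {..y} f"
      unfolding set_borel_measurable_def by measurable
    show "AE z in lborel. (z \<in> {..<y}) = (z \<in> {..y})"
      by (rule AE_mp[OF AE_lborel_singleton[of y]]) (auto intro!: AE_I2)
  qed
  then show ?thesis by (simp add: primitive_def interval_lebesgue_integral_def)
qed

lemma prim_split: "cls f \<Longrightarrow> primitive f y = (LBINT z=-\<infinity>..0. f z) + (LBINT z=ereal 0..ereal y. f z)"
  unfolding prim_eq zero_ereal_def
  by (rule interval_integral_sum[symmetric], rule cls_interval_int)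

lemma prim_deriv:
  assumes f: "cls f"
  shows "(primitive f has_real_derivative f y) (at y)"
proof -
  define a where "a = - \<bar>y\<bar> - 1"
  define b where "b = \<bar>y\<bar> + 1"
  have cf: "continuous_on {a..b} f" using cls_cont[OF f] by (rule continuous_on_subset) simp
  have "((\<lambda>u. LBINT z=ereal 0..ereal u. f z) has_vector_derivative f y) (at y within {a..b})"
    by (rule interval_integral_FTC2[OF _ _ cf]) (auto simp: a_def b_def)
  then have "((\<lambda>u. LBINT z=ereal 0..ereal u. f z) has_vector_derivative f y) (at y within {a<..<b})"
    by (rule has_vector_derivative_within_subset) auto
  then have "((\<lambda>u. LBINT z=ereal 0..ereal u. f z) has_vector_derivative f y) (at y)"
    by (subst (asm) has_vector_derivative_within_open) (auto simp: a_def b_def)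
  then have "((\<lambda>u. LBINT z=ereal 0..ereal u. f z) has_real_derivative f y) (at y)"
    by (simp add: has_real_derivative_iff_has_vector_derivative)
  then have "((\<lambda>u. (LBINT z=-\<infinity>..0. f z) + (LBINT z=ereal 0..ereal u. f z)) has_real_derivative 0 + f y) (at y)"
    by (intro DERIV_add DERIV_const)
  moreover have "primitive f = (\<lambda>u. (LBINT z=-\<infinity>..0. f z) + (LBINT z=ereal 0..ereal u. f z))"
    using prim_split[OF f] by auto
  ultimately show ?thesis by simp
qed

lemma wave_dt:
  assumes F: "cls F" and e: "\<epsilon> \<noteq> 0"
  shows "deriv (\<lambda>s. wave c d v F s x \<epsilon>) t = d * F ((x - v * t) / \<epsilon>) * (- v / \<epsilon>)"
proof -
  have i: "((\<lambda>s. (x - v * s) / \<epsilon>) has_real_derivative (- v / \<epsilon>)) (at t)"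
    using e by (auto intro!: derivative_eq_intros simp: field_simps)
  have "((\<lambda>s. c + d * primitive F ((x - v * s) / \<epsilon>)) has_real_derivative
      0 + d * (F ((x - v * t) / \<epsilon>) * (- v / \<epsilon>))) (at t)"
    by (intro DERIV_add DERIV_const DERIV_cmult DERIV_chain2[OF prim_deriv[OF F] i])
  then show ?thesis unfolding wave_def by (intro DERIV_imp_deriv) (simp add: mult.assoc)
qed

lemma wave_dx:
  assumes F: "cls F" and e: "\<epsilon> \<noteq> 0"
  shows "deriv (\<lambda>y. wave c d v F t y \<epsilon>) x = d * F ((x - v * t) / \<epsilon>) * (1 / \<epsilon>)"
proof -
  have i: "((\<lambda>y. (y - v * t) / \<epsilon>) has_real_derivative (1 / \<epsilon>)) (at x)"
    using e by (auto intro!: derivative_eq_intros simp: field_simps)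
  have "((\<lambda>y. c + d * primitive F ((y - v * t) / \<epsilon>)) has_real_derivative
      0 + d * (F ((x - v * t) / \<epsilon>) * (1 / \<epsilon>))) (at x)"
    by (intro DERIV_add DERIV_const DERIV_cmult DERIV_chain2[OF prim_deriv[OF F] i])
  then show ?thesis unfolding wave_def by (intro DERIV_imp_deriv) (simp add: mult.assoc)
qed

lemma subst_int:
  fixes G \<psi> :: "real \<Rightarrow> real"
  assumes e: "\<epsilon> > 0"
  shows "(LBINT x. (1 / \<epsilon>) * G ((x - a) / \<epsilon>) * \<psi> x) = (LBINT y. G y * \<psi> (a + \<epsilon> * y))"
proof -
  have "(LBINT x. (1 / \<epsilon>) * G ((x - a) / \<epsilon>) * \<psi> x) = \<bar>\<epsilon>\<bar> *\<^sub>R (LBINT y. (1 / \<epsilon>) * G ((a + \<epsilon> * y - a) / \<epsilon>) * \<psi> (a + \<epsilon> * y))"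
    by (rule lborel_integral_real_affine) (use e in simp)
  also have "\<dots> = (LBINT y. G y * \<psi> (a + \<epsilon> * y))"
    using e by simp
  finally show ?thesis .
qed

lemma zero_up_to_G:
  assumes G: "cls G" and psi: "schwartz \<psi>"
  and van: "\<And>j. int j < p \<Longrightarrow> (LBINT y. y ^ j * G y) = 0"
  and FE: "\<And>\<epsilon>. \<epsilon> > 0 \<Longrightarrow> F \<epsilon> = (LBINT y. G y * \<psi> (a + \<epsilon> * y))"
  shows "zero_up_to p F"
proof (rule zero_up_to_from_bounds[where c="\<lambda>j. (deriv ^^ j) \<psi> a / fact j * (LBINT y. y ^ j * G y)"])
  fix n :: nat
  obtain K where K: "\<forall>\<epsilon>>0. \<bar>(LBINT y. G y * \<psi> (a + \<epsilon> * y))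
      - (\<Sum>j<n. (deriv ^^ j) \<psi> a / fact j * (LBINT y. y ^ j * G y) * \<epsilon> ^ j)\<bar> \<le> K * \<epsilon> ^ n"
    using expansion_bound[OF G psi] by blast
  then show "\<exists>K. \<forall>\<epsilon>>0. \<bar>F \<epsilon> - (\<Sum>j<n. (deriv ^^ j) \<psi> a / fact j * (LBINT y. y ^ j * G y) * \<epsilon> ^ j)\<bar> \<le> K * \<epsilon> ^ n"
    using FE by auto
next
  fix j :: nat assume "int j < p"
  then show "(deriv ^^ j) \<psi> a / fact j * (LBINT y. y ^ j * G y) = 0" using van by simp
qed

theorem theorem4:
  fixes T k :: real and p :: int
  assumes "T > 0"
  shows "\<exists>u0 du \<sigma>0 d\<sigma> v Ut St.
     du \<noteq> 0 \<and> d\<sigma> \<noteq> 0 \<and> schwartz Ut \<and> schwartz St \<and>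
     (LBINT y. Ut y) = 1 \<and> (LBINT y. St y) = 1 \<and>
     (let u = wave u0 du v Ut; \<sigma> = wave \<sigma>0 d\<sigma> v St in
      \<forall>t\<in>{0..T}. \<forall>\<psi>. schwartz \<psi> \<longrightarrow>
        zero_up_to p (\<lambda>\<epsilon>. LBINT x.
           (deriv (\<lambda>s. u s x \<epsilon>) t + 2 * u t x \<epsilon> * deriv (\<lambda>y. u t y \<epsilon>) x
             - deriv (\<lambda>y. \<sigma> t y \<epsilon>) x) * \<psi> x) \<and>
        zero_up_to p (\<lambda>\<epsilon>. LBINT x.
           (deriv (\<lambda>s. \<sigma> s x \<epsilon>) t + u t x \<epsilon> * deriv (\<lambda>y. \<sigma> t y \<epsilon>) x
             - k\<^sup>2 * deriv (\<lambda>y. u t y \<epsilon>) x) * \<psi> x)) \<and>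
     v = 2 * u0 + du - d\<sigma> / du \<and>
     d\<sigma>\<^sup>2 - (u0 + du / 2) * du * d\<sigma> - k\<^sup>2 * du\<^sup>2 = 0"
proof -
  define N where "N = nat p + 1"
  define A where "A i = (LBINT x. x ^ i * (2 * U x * Ut x))" for i
  define Bt where "Bt i = (LBINT x. x ^ i * Ut x)" for i
  define y where "y i = (if i < N then A i else k^2 * Bt (i - N) - (k^2 - 1/2) * A (i - N))" for i
  obtain St where St: "cls St" and phiSt: "\<forall>i<N+N. phi N i St = y i" using exists_phi by blast
  have mom1: "(LBINT x. x ^ i * St x) = A i" if "i < N" for i
    using phiSt[rule_format, of i] that by (simp add: phi_def y_def)
  have mom2: "(LBINT x. x ^ i * (U x * St x)) = k^2 * Bt i - (k^2 - 1/2) * A i" if "i < N" for i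
    using phiSt[rule_format, of "N + i"] that by (simp add: phi_def y_def)
  have UUt: "cls (\<lambda>x. 2 * U x * Ut x)"
    using cls_scale[OF cls_mult_U[OF cls_Ut], of 2] by (simp add: mult.assoc)
  define G1 where "G1 x = 2 * U x * Ut x - St x" for x
  define G2 where "G2 x = (k^2 - 1/2) * St x + U x * St x - k^2 * Ut x" for x
  have cG1: "cls G1" unfolding G1_def[abs_def] by (rule cls_diff[OF UUt St])
  have cG2: "cls G2" unfolding G2_def[abs_def]
    by (intro cls_diff cls.add cls_scale cls_mult_U St cls_Ut)
  have iUUt: "integrable lborel (\<lambda>x. x ^ i * (2 * U x * Ut x))" for i by (rule cls_int_pow[OF UUt])
  have iSt: "integrable lborel (\<lambda>x. x ^ i * St x)" for i by (rule cls_int_pow[OF St])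
  have iUSt: "integrable lborel (\<lambda>x. x ^ i * (U x * St x))" for i by (rule cls_int_pow[OF cls_mult_U[OF St]])
  have iUt: "integrable lborel (\<lambda>x. x ^ i * Ut x)" for i by (rule cls_int_pow[OF cls_Ut])
  have G1m: "(LBINT x. x ^ i * G1 x) = 0" if "i < N" for i
  proof -
    have "(LBINT x. x ^ i * G1 x) = (LBINT x. x ^ i * (2 * U x * Ut x) - x ^ i * St x)"
      by (simp add: G1_def right_diff_distrib)
    also have "\<dots> = A i - A i"
      using Bochner_Integration.integral_diff[OF iUUt iSt] mom1[OF that] by (simp add: A_def)
    finally show ?thesis by simp
  qed
  have G2m: "(LBINT x. x ^ i * G2 x) = 0" if "i < N" for i
  proof -
    have e: "(\<lambda>x. x ^ i * G2 x) = (\<lambda>x. ((k^2 - 1/2) * (x ^ i * St x) + x ^ i * (U x * St x)) - k^2 * (x ^ i * Ut x))"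
      by (rule ext) (simp add: G2_def algebra_simps)
    have "(LBINT x. x ^ i * G2 x) = (LBINT x. (k^2 - 1/2) * (x ^ i * St x) + x ^ i * (U x * St x)) - (LBINT x. k^2 * (x ^ i * Ut x))"
      unfolding e by (rule Bochner_Integration.integral_diff) (use iSt iUSt iUt in auto)
    also have "(LBINT x. (k^2 - 1/2) * (x ^ i * St x) + x ^ i * (U x * St x)) =
        (LBINT x. (k^2 - 1/2) * (x ^ i * St x)) + (LBINT x. x ^ i * (U x * St x))"
      by (rule Bochner_Integration.integral_add) (use iSt iUSt in auto)
    also have "(LBINT x. (k^2 - 1/2) * (x ^ i * St x)) = (k^2 - 1/2) * A i"
      by (simp only: integral_mult_right_zero mom1[OF that])
    also have "(LBINT x. k^2 * (x ^ i * Ut x)) = k^2 * Bt i"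
      by (simp only: integral_mult_right_zero Bt_def)
    finally show ?thesis using mom2[OF that] by (simp add: algebra_simps)
  qed
  have N0: "0 < N" by (simp add: N_def)
  have St1: "(LBINT x. St x) = 1"
    using mom1[OF N0] UUt_integral by (simp add: A_def mult.assoc)
  have van: "i < N" if "int i < p" for i using that by (simp add: N_def)
  define v where "v = 1 - 2 * k^2"
  define u0 where "u0 = 1/2 - k^2"
  have main: "zero_up_to p (\<lambda>\<epsilon>. LBINT x.
           (deriv (\<lambda>s. wave u0 1 v Ut s x \<epsilon>) t + 2 * wave u0 1 v Ut t x \<epsilon> * deriv (\<lambda>y. wave u0 1 v Ut t y \<epsilon>) x
             - deriv (\<lambda>y. wave 0 1 v St t y \<epsilon>) x) * \<psi> x) \<and>
        zero_up_to p (\<lambda>\<epsilon>. LBINT x.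
           (deriv (\<lambda>s. wave 0 1 v St s x \<epsilon>) t + wave u0 1 v Ut t x \<epsilon> * deriv (\<lambda>y. wave 0 1 v St t y \<epsilon>) x
             - k\<^sup>2 * deriv (\<lambda>y. wave u0 1 v Ut t y \<epsilon>) x) * \<psi> x)"
    if psi: "schwartz \<psi>" for t \<psi>
  proof
    show "zero_up_to p (\<lambda>\<epsilon>. LBINT x.
           (deriv (\<lambda>s. wave u0 1 v Ut s x \<epsilon>) t + 2 * wave u0 1 v Ut t x \<epsilon> * deriv (\<lambda>y. wave u0 1 v Ut t y \<epsilon>) x
             - deriv (\<lambda>y. wave 0 1 v St t y \<epsilon>) x) * \<psi> x)"
    proof (rule zero_up_to_G[OF cG1 psi])
      show "(LBINT y. y ^ j * G1 y) = 0" if "int j < p" for j using G1m van that by blast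
      fix \<epsilon> :: real assume e: "\<epsilon> > 0"
      have "(\<lambda>x. (deriv (\<lambda>s. wave u0 1 v Ut s x \<epsilon>) t + 2 * wave u0 1 v Ut t x \<epsilon> * deriv (\<lambda>y. wave u0 1 v Ut t y \<epsilon>) x
             - deriv (\<lambda>y. wave 0 1 v St t y \<epsilon>) x) * \<psi> x) = (\<lambda>x. (1 / \<epsilon>) * G1 ((x - v * t) / \<epsilon>) * \<psi> x)"
      proof (rule ext)
        fix x
        show "(deriv (\<lambda>s. wave u0 1 v Ut s x \<epsilon>) t + 2 * wave u0 1 v Ut t x \<epsilon> * deriv (\<lambda>y. wave u0 1 v Ut t y \<epsilon>) x
             - deriv (\<lambda>y. wave 0 1 v St t y \<epsilon>) x) * \<psi> x = (1 / \<epsilon>) * G1 ((x - v * t) / \<epsilon>) * \<psi> x"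
        proof -
          have ne: "\<epsilon> \<noteq> 0" using e by simp
          show ?thesis
            unfolding wave_dt[OF cls_Ut ne] wave_dx[OF cls_Ut ne] wave_dx[OF St ne]
            using e by (simp add: wave_def primitive_Ut G1_def v_def u0_def field_simps)
        qed
      qed
      then show "(LBINT x. (deriv (\<lambda>s. wave u0 1 v Ut s x \<epsilon>) t + 2 * wave u0 1 v Ut t x \<epsilon> * deriv (\<lambda>y. wave u0 1 v Ut t y \<epsilon>) x
             - deriv (\<lambda>y. wave 0 1 v St t y \<epsilon>) x) * \<psi> x) = (LBINT y. G1 y * \<psi> (v * t + \<epsilon> * y))"
        using subst_int[OF e, of G1 "v * t" \<psi>] by simp
    qed
    show "zero_up_to p (\<lambda>\<epsilon>. LBINT x.
           (deriv (\<lambda>s. wave 0 1 v St s x \<epsilon>) t + wave u0 1 v Ut t x \<epsilon> * deriv (\<lambda>y. wave 0 1 v St t y \<epsilon>) x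
             - k\<^sup>2 * deriv (\<lambda>y. wave u0 1 v Ut t y \<epsilon>) x) * \<psi> x)"
    proof (rule zero_up_to_G[OF cG2 psi])
      show "(LBINT y. y ^ j * G2 y) = 0" if "int j < p" for j using G2m van that by blast
      fix \<epsilon> :: real assume e: "\<epsilon> > 0"
      have "(\<lambda>x. (deriv (\<lambda>s. wave 0 1 v St s x \<epsilon>) t + wave u0 1 v Ut t x \<epsilon> * deriv (\<lambda>y. wave 0 1 v St t y \<epsilon>) x
             - k\<^sup>2 * deriv (\<lambda>y. wave u0 1 v Ut t y \<epsilon>) x) * \<psi> x) = (\<lambda>x. (1 / \<epsilon>) * G2 ((x - v * t) / \<epsilon>) * \<psi> x)"
      proof (rule ext)
        fix x
        show "(deriv (\<lambda>s. wave 0 1 v St s x \<epsilon>) t + wave u0 1 v Ut t x \<epsilon> * deriv (\<lambda>y. wave 0 1 v St t y \<epsilon>) x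
             - k\<^sup>2 * deriv (\<lambda>y. wave u0 1 v Ut t y \<epsilon>) x) * \<psi> x = (1 / \<epsilon>) * G2 ((x - v * t) / \<epsilon>) * \<psi> x"
        proof -
          have ne: "\<epsilon> \<noteq> 0" using e by simp
          show ?thesis
            unfolding wave_dt[OF St ne] wave_dx[OF cls_Ut ne] wave_dx[OF St ne]
            using e by (simp add: wave_def primitive_Ut G2_def v_def u0_def field_simps)
        qed
      qed
      then show "(LBINT x. (deriv (\<lambda>s. wave 0 1 v St s x \<epsilon>) t + wave u0 1 v Ut t x \<epsilon> * deriv (\<lambda>y. wave 0 1 v St t y \<epsilon>) x
             - k\<^sup>2 * deriv (\<lambda>y. wave u0 1 v Ut t y \<epsilon>) x) * \<psi> x) = (LBINT y. G2 y * \<psi> (v * t + \<epsilon> * y))"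
        using subst_int[OF e, of G2 "v * t" \<psi>] by simp
    qed
  qed
  show ?thesis
    apply (rule exI[of _ u0], rule exI[of _ 1], rule exI[of _ 0], rule exI[of _ 1], rule exI[of _ v],
           rule exI[of _ Ut], rule exI[of _ St])
    using main cls_schwartz[OF cls_Ut] cls_schwartz[OF St] Ut_integral St1
    by (simp add: Let_def v_def u0_def power2_eq_square algebra_simps)
qed

end
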